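(* Let $A$ be a non-symmetric haploid commutative $\Delta$-separable special Frobenius algebra in $\mathcal{C}$, with Nakayama automorphism $N_A$. Then $\mu\circ(N_A\otimes\mathrm{id}_A)\circ\Delta=0$.
   Context: Standing assumptions: $k$ is a field with $\mathrm{char}(k)\neq 2$. $\mathcal{C}$ is a $k$-linear additive idempotent-complete ribbon category, strict as a monoidal category, with bilinear tensor product and absolutely simple tensor unit ($\mathrm{End}_{\mathcal{C}}(1)=k\,\mathrm{id}_1$), with braiding $c$ and twist $\theta$. A Frobenius algebra $(A,\mu,\eta,\Delta,\epsilon)$ is an algebra and coalgebra with $(\mathrm{id}\otimes\mu)(\Delta\otimes\mathrm{id})=\Delta\mu=(\mu\otimes\mathrm{id})(\mathrm{id}\otimes\Delta)$. It is commutative if $\mu\circ c_{A,A}=\mu$; $\Delta$-separable if $\mu\circ\Delta=\mathrm{id}_A$; special if $\epsilon\circ\eta\in k^\times\mathrm{id}_1$ and $\mu\circ\Delta\in k^\times\mathrm{id}_A$; haploid if $\dim_k\mathrm{Hom}(1,A)=1$. The Nakayama automorphism is $N_A=\Phi_1^{-1}\circ\Phi_2$, where with $\kappa=\epsilon\circ\mu$, $\Phi_1=(\kappa\otimes\mathrm{id}_{A^*})(\mathrm{id}_A\otimes\mathrm{coev}_A)$ and $\Phi_2=(\mathrm{id}_{A^*}\otimes\kappa)(\widetilde{\mathrm{coev}}_A\otimes\mathrm{id}_A)$ are the isomorphisms $A\to A^*$ given by the Frobenius pairing and the two coevaluations of the pivotal structure; $A$ is symmetric if $N_A=\mathrm{id}_A$.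 *)

theory Defs
  imports Main
begin

text \<open>
  A k-linear strict monoidal category with braiding, twist and (left) duals, encoded by
  its operations.  Objects form the type 'o, morphisms the type 'm (every element of 'm is
  a morphism with a domain and codomain), scalars the field 'k.
  Comp C g f is the composite g after f (meaningful when Cod f = Dom g).
  Ev X : X* (x) X -> 1 and Coev X : 1 -> X (x) X* (left duality).
\<close>

record ('o, 'm, 'k) rcat =
  Dom   :: "'m \<Rightarrow> 'o"
  Cod   :: "'m \<Rightarrow> 'o"
  Id    :: "'o \<Rightarrow> 'm"
  Comp  :: "'m \<Rightarrow> 'm \<Rightarrow> 'm"
  Add   :: "'m \<Rightarrow> 'm \<Rightarrow> 'm"
  Smult :: "'k \<Rightarrow> 'm \<Rightarrow> 'm"
  Zero  :: "'o \<Rightarrow> 'o \<Rightarrow> 'm"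
  Tens  :: "'o \<Rightarrow> 'o \<Rightarrow> 'o"
  TensM :: "'m \<Rightarrow> 'm \<Rightarrow> 'm"
  Unit  :: "'o"
  Braid :: "'o \<Rightarrow> 'o \<Rightarrow> 'm"
  Twist :: "'o \<Rightarrow> 'm"
  Dual  :: "'o \<Rightarrow> 'o"
  Ev    :: "'o \<Rightarrow> 'm"
  Coev  :: "'o \<Rightarrow> 'm"

definition hom :: "('o, 'm, 'k, 'z) rcat_scheme \<Rightarrow> 'o \<Rightarrow> 'o \<Rightarrow> 'm set" where
  "hom C X Y = {f. Dom C f = X \<and> Cod C f = Y}"

definition is_iso :: "('o, 'm, 'k, 'z) rcat_scheme \<Rightarrow> 'm \<Rightarrow> bool" where
  "is_iso C f \<longleftrightarrow> (\<exists>g \<in> hom C (Cod C f) (Dom C f).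
      Comp C g f = Id C (Dom C f) \<and> Comp C f g = Id C (Cod C f))"

definition category_ax :: "('o, 'm, 'k, 'z) rcat_scheme \<Rightarrow> bool" where
  "category_ax C \<longleftrightarrow>
     (\<forall>X. Id C X \<in> hom C X X)
   \<and> (\<forall>f g. Cod C f = Dom C g \<longrightarrow> Comp C g f \<in> hom C (Dom C f) (Cod C g))
   \<and> (\<forall>f. Comp C f (Id C (Dom C f)) = f \<and> Comp C (Id C (Cod C f)) f = f)
   \<and> (\<forall>f g h. Cod C f = Dom C g \<longrightarrow> Cod C g = Dom C h \<longrightarrow>
        Comp C h (Comp C g f) = Comp C (Comp C h g) f)"

definition klinear_ax :: "('o, 'm, 'k::field, 'z) rcat_scheme \<Rightarrow> bool" where
  "klinear_ax C \<longleftrightarrow>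
     (\<forall>X Y. Zero C X Y \<in> hom C X Y)
   \<and> (\<forall>X Y. \<forall>f \<in> hom C X Y. \<forall>g \<in> hom C X Y. Add C f g \<in> hom C X Y)
   \<and> (\<forall>X Y a. \<forall>f \<in> hom C X Y. Smult C a f \<in> hom C X Y)
   \<and> (\<forall>X Y. \<forall>f \<in> hom C X Y. \<forall>g \<in> hom C X Y. \<forall>h \<in> hom C X Y.
        Add C (Add C f g) h = Add C f (Add C g h))
   \<and> (\<forall>X Y. \<forall>f \<in> hom C X Y. \<forall>g \<in> hom C X Y. Add C f g = Add C g f)
   \<and> (\<forall>X Y. \<forall>f \<in> hom C X Y. Add C f (Zero C X Y) = f)
   \<and> (\<forall>X Y. \<forall>f \<in> hom C X Y. \<exists>g \<in> hom C X Y. Add C f g = Zero C X Y)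
   \<and> (\<forall>X Y a. \<forall>f \<in> hom C X Y. \<forall>g \<in> hom C X Y.
        Smult C a (Add C f g) = Add C (Smult C a f) (Smult C a g))
   \<and> (\<forall>X Y a b. \<forall>f \<in> hom C X Y. Smult C (a + b) f = Add C (Smult C a f) (Smult C b f))
   \<and> (\<forall>X Y a b. \<forall>f \<in> hom C X Y. Smult C (a * b) f = Smult C a (Smult C b f))
   \<and> (\<forall>X Y. \<forall>f \<in> hom C X Y. Smult C 1 f = f)
   \<and> (\<forall>X Y Z. \<forall>f1 \<in> hom C X Y. \<forall>f2 \<in> hom C X Y. \<forall>g \<in> hom C Y Z.
        Comp C g (Add C f1 f2) = Add C (Comp C g f1) (Comp C g f2))
   \<and> (\<forall>X Y Z. \<forall>f \<in> hom C X Y. \<forall>g1 \<in> hom C Y Z. \<forall>g2 \<in> hom C Y Z.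
        Comp C (Add C g1 g2) f = Add C (Comp C g1 f) (Comp C g2 f))
   \<and> (\<forall>X Y Z a. \<forall>f \<in> hom C X Y. \<forall>g \<in> hom C Y Z.
        Comp C g (Smult C a f) = Smult C a (Comp C g f)
      \<and> Comp C (Smult C a g) f = Smult C a (Comp C g f))"

definition additive_ax :: "('o, 'm, 'k::field, 'z) rcat_scheme \<Rightarrow> bool" where
  "additive_ax C \<longleftrightarrow>
     (\<exists>Z. Id C Z = Zero C Z Z)
   \<and> (\<forall>X Y. \<exists>P. \<exists>i1 \<in> hom C X P. \<exists>i2 \<in> hom C Y P. \<exists>p1 \<in> hom C P X. \<exists>p2 \<in> hom C P Y.
        Comp C p1 i1 = Id C X \<and> Comp C p2 i2 = Id C Y
      \<and> Comp C p1 i2 = Zero C Y X \<and> Comp C p2 i1 = Zero C X Y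
      \<and> Add C (Comp C i1 p1) (Comp C i2 p2) = Id C P)"

definition idem_complete_ax :: "('o, 'm, 'k, 'z) rcat_scheme \<Rightarrow> bool" where
  "idem_complete_ax C \<longleftrightarrow>
     (\<forall>X. \<forall>e \<in> hom C X X. Comp C e e = e \<longrightarrow>
        (\<exists>Y. \<exists>r \<in> hom C X Y. \<exists>s \<in> hom C Y X. Comp C r s = Id C Y \<and> Comp C s r = e))"

definition strict_monoidal_ax :: "('o, 'm, 'k::field, 'z) rcat_scheme \<Rightarrow> bool" where
  "strict_monoidal_ax C \<longleftrightarrow>
     (\<forall>X Y Z. Tens C (Tens C X Y) Z = Tens C X (Tens C Y Z))
   \<and> (\<forall>X. Tens C (Unit C) X = X \<and> Tens C X (Unit C) = X)
   \<and> (\<forall>f g. TensM C f g \<in> hom C (Tens C (Dom C f) (Dom C g)) (Tens C (Cod C f) (Cod C g)))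
   \<and> (\<forall>f g h. TensM C (TensM C f g) h = TensM C f (TensM C g h))
   \<and> (\<forall>f. TensM C (Id C (Unit C)) f = f \<and> TensM C f (Id C (Unit C)) = f)
   \<and> (\<forall>X Y. TensM C (Id C X) (Id C Y) = Id C (Tens C X Y))
   \<and> (\<forall>f1 g1 f2 g2. Cod C f1 = Dom C g1 \<longrightarrow> Cod C f2 = Dom C g2 \<longrightarrow>
        TensM C (Comp C g1 f1) (Comp C g2 f2) = Comp C (TensM C g1 g2) (TensM C f1 f2))
   \<and> (\<forall>X Y. \<forall>f1 \<in> hom C X Y. \<forall>f2 \<in> hom C X Y. \<forall>g.
        TensM C (Add C f1 f2) g = Add C (TensM C f1 g) (TensM C f2 g)
      \<and> TensM C g (Add C f1 f2) = Add C (TensM C g f1) (TensM C g f2))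
   \<and> (\<forall>a f g. TensM C (Smult C a f) g = Smult C a (TensM C f g)
            \<and> TensM C g (Smult C a f) = Smult C a (TensM C g f))"

definition braided_ax :: "('o, 'm, 'k, 'z) rcat_scheme \<Rightarrow> bool" where
  "braided_ax C \<longleftrightarrow>
     (\<forall>X Y. Braid C X Y \<in> hom C (Tens C X Y) (Tens C Y X) \<and> is_iso C (Braid C X Y))
   \<and> (\<forall>f g. Comp C (Braid C (Cod C f) (Cod C g)) (TensM C f g)
            = Comp C (TensM C g f) (Braid C (Dom C f) (Dom C g)))
   \<and> (\<forall>X Y Z. Braid C X (Tens C Y Z)
        = Comp C (TensM C (Id C Y) (Braid C X Z)) (TensM C (Braid C X Y) (Id C Z)))
   \<and> (\<forall>X Y Z. Braid C (Tens C X Y) Z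
        = Comp C (TensM C (Braid C X Z) (Id C Y)) (TensM C (Id C X) (Braid C Y Z)))"

definition rigid_ax :: "('o, 'm, 'k, 'z) rcat_scheme \<Rightarrow> bool" where
  "rigid_ax C \<longleftrightarrow>
     (\<forall>X. Ev C X \<in> hom C (Tens C (Dual C X) X) (Unit C)
        \<and> Coev C X \<in> hom C (Unit C) (Tens C X (Dual C X)))
   \<and> (\<forall>X. Comp C (TensM C (Id C X) (Ev C X)) (TensM C (Coev C X) (Id C X)) = Id C X)
   \<and> (\<forall>X. Comp C (TensM C (Ev C X) (Id C (Dual C X))) (TensM C (Id C (Dual C X)) (Coev C X))
          = Id C (Dual C X))"

definition dualM :: "('o, 'm, 'k, 'z) rcat_scheme \<Rightarrow> 'm \<Rightarrow> 'm" where
  "dualM C f = (let X = Dom C f; Y = Cod C f in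
     Comp C (TensM C (Ev C Y) (Id C (Dual C X)))
       (Comp C (TensM C (TensM C (Id C (Dual C Y)) f) (Id C (Dual C X)))
               (TensM C (Id C (Dual C Y)) (Coev C X))))"

text \<open>Twist (Turaev's convention).\<close>
definition twist_ax :: "('o, 'm, 'k, 'z) rcat_scheme \<Rightarrow> bool" where
  "twist_ax C \<longleftrightarrow>
     (\<forall>X. Twist C X \<in> hom C X X \<and> is_iso C (Twist C X))
   \<and> (\<forall>f. Comp C (Twist C (Cod C f)) f = Comp C f (Twist C (Dom C f)))
   \<and> (\<forall>X Y. Twist C (Tens C X Y)
        = Comp C (Braid C Y X) (Comp C (Braid C X Y) (TensM C (Twist C X) (Twist C Y))))
   \<and> (\<forall>X. dualM C (Twist C X) = Twist C (Dual C X))"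

definition simple_unit_ax :: "('o, 'm, 'k::field, 'z) rcat_scheme \<Rightarrow> bool" where
  "simple_unit_ax C \<longleftrightarrow>
     Id C (Unit C) \<noteq> Zero C (Unit C) (Unit C)
   \<and> (\<forall>f \<in> hom C (Unit C) (Unit C). \<exists>a. f = Smult C a (Id C (Unit C)))"

definition ribbon_category :: "('o, 'm, 'k::field, 'z) rcat_scheme \<Rightarrow> bool" where
  "ribbon_category C \<longleftrightarrow> category_ax C \<and> klinear_ax C \<and> additive_ax C
     \<and> idem_complete_ax C \<and> strict_monoidal_ax C \<and> braided_ax C \<and> rigid_ax C
     \<and> twist_ax C \<and> simple_unit_ax C"

text \<open>Right (co)evaluations of the pivotal structure induced by the ribbon structure:
  tev X : X (x) X* -> 1 and tcoev X : 1 -> X* (x) X.\<close>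
definition tev :: "('o, 'm, 'k, 'z) rcat_scheme \<Rightarrow> 'o \<Rightarrow> 'm" where
  "tev C X = Comp C (Ev C X) (Comp C (Braid C X (Dual C X)) (TensM C (Twist C X) (Id C (Dual C X))))"

definition tcoev :: "('o, 'm, 'k, 'z) rcat_scheme \<Rightarrow> 'o \<Rightarrow> 'm" where
  "tcoev C X = Comp C (TensM C (Id C (Dual C X)) (Twist C X)) (Comp C (Braid C X (Dual C X)) (Coev C X))"

definition frobenius_algebra ::
  "('o, 'm, 'k, 'z) rcat_scheme \<Rightarrow> 'o \<Rightarrow> 'm \<Rightarrow> 'm \<Rightarrow> 'm \<Rightarrow> 'm \<Rightarrow> bool" where
  "frobenius_algebra C A mu eta delta eps \<longleftrightarrow>
     mu \<in> hom C (Tens C A A) A \<and> eta \<in> hom C (Unit C) A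
   \<and> delta \<in> hom C A (Tens C A A) \<and> eps \<in> hom C A (Unit C)
   \<and> Comp C mu (TensM C mu (Id C A)) = Comp C mu (TensM C (Id C A) mu)
   \<and> Comp C mu (TensM C eta (Id C A)) = Id C A
   \<and> Comp C mu (TensM C (Id C A) eta) = Id C A
   \<and> Comp C (TensM C delta (Id C A)) delta = Comp C (TensM C (Id C A) delta) delta
   \<and> Comp C (TensM C eps (Id C A)) delta = Id C A
   \<and> Comp C (TensM C (Id C A) eps) delta = Id C A
   \<and> Comp C (TensM C (Id C A) mu) (TensM C delta (Id C A)) = Comp C delta mu
   \<and> Comp C delta mu = Comp C (TensM C mu (Id C A)) (TensM C (Id C A) delta)"

definition commutative_alg :: "('o, 'm, 'k, 'z) rcat_scheme \<Rightarrow> 'o \<Rightarrow> 'm \<Rightarrow> bool" where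
  "commutative_alg C A mu \<longleftrightarrow> Comp C mu (Braid C A A) = mu"

definition delta_separable :: "('o, 'm, 'k, 'z) rcat_scheme \<Rightarrow> 'o \<Rightarrow> 'm \<Rightarrow> 'm \<Rightarrow> bool" where
  "delta_separable C A mu delta \<longleftrightarrow> Comp C mu delta = Id C A"

definition special_frob ::
  "('o, 'm, 'k::field, 'z) rcat_scheme \<Rightarrow> 'o \<Rightarrow> 'm \<Rightarrow> 'm \<Rightarrow> 'm \<Rightarrow> 'm \<Rightarrow> bool" where
  "special_frob C A mu eta delta eps \<longleftrightarrow>
     (\<exists>a. a \<noteq> 0 \<and> Comp C eps eta = Smult C a (Id C (Unit C)))
   \<and> (\<exists>b. b \<noteq> 0 \<and> Comp C mu delta = Smult C b (Id C A))"

definition haploid :: "('o, 'm, 'k::field, 'z) rcat_scheme \<Rightarrow> 'o \<Rightarrow> bool" where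
  "haploid C A \<longleftrightarrow> (\<exists>f \<in> hom C (Unit C) A. f \<noteq> Zero C (Unit C) A
      \<and> (\<forall>g \<in> hom C (Unit C) A. \<exists>a. g = Smult C a f))"

definition inverse_mor :: "('o, 'm, 'k, 'z) rcat_scheme \<Rightarrow> 'm \<Rightarrow> 'm" where
  "inverse_mor C f = (THE g. g \<in> hom C (Cod C f) (Dom C f)
      \<and> Comp C g f = Id C (Dom C f) \<and> Comp C f g = Id C (Cod C f))"

definition nakayama ::
  "('o, 'm, 'k, 'z) rcat_scheme \<Rightarrow> 'o \<Rightarrow> 'm \<Rightarrow> 'm \<Rightarrow> 'm" where
  "nakayama C A mu eps = (let kappa = Comp C eps mu;
      Phi1 = Comp C (TensM C kappa (Id C (Dual C A))) (TensM C (Id C A) (Coev C A));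
      Phi2 = Comp C (TensM C (Id C (Dual C A)) kappa) (TensM C (tcoev C A) (Id C A))
    in Comp C (inverse_mor C Phi1) Phi2)"

end

theory Submission
  imports Defs
begin


locale rib =
  fixes C :: "('o, 'm, 'k::field) rcat"
  assumes rc: "ribbon_category C"
begin

abbreviation cp (infixr "\<cdot>" 55) where "g \<cdot> f \<equiv> Comp C g f"
abbreviation tm (infixr "\<otimes>" 65) where "f \<otimes> g \<equiv> TensM C f g"
abbreviation to (infixr "\<odot>" 70) where "X \<odot> Y \<equiv> Tens C X Y"
abbreviation idm where "idm X \<equiv> Id C X"
abbreviation U where "U \<equiv> Unit C"

lemma cat: "category_ax C" and kl: "klinear_ax C" and sm: "strict_monoidal_ax C"
  and br: "braided_ax C" and rg: "rigid_ax C" and tw: "twist_ax C" and su: "simple_unit_ax C"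
  using rc unfolding ribbon_category_def by auto

lemma Id_dom[simp]: "Dom C (idm X) = X" and Id_cod[simp]: "Cod C (idm X) = X"
  using cat unfolding category_ax_def hom_def by auto

lemma comp_dom[simp]: "Cod C f = Dom C g \<Longrightarrow> Dom C (g \<cdot> f) = Dom C f"
  and comp_cod[simp]: "Cod C f = Dom C g \<Longrightarrow> Cod C (g \<cdot> f) = Cod C g"
  using cat unfolding category_ax_def hom_def by auto

lemma comp_idr[simp]: "Dom C f = X \<Longrightarrow> f \<cdot> idm X = f"
  and comp_idl[simp]: "Cod C f = X \<Longrightarrow> idm X \<cdot> f = f"
  using cat unfolding category_ax_def by auto

lemma assoc: "Cod C f = Dom C g \<Longrightarrow> Cod C g = Dom C h \<Longrightarrow> h \<cdot> (g \<cdot> f) = (h \<cdot> g) \<cdot> f"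
  using cat unfolding category_ax_def by auto

lemma tens_assoc[simp]: "(X \<odot> Y) \<odot> Z = X \<odot> (Y \<odot> Z)"
  and tens_unit[simp]: "U \<odot> X = X" "X \<odot> U = X"
  using sm unfolding strict_monoidal_ax_def by auto

lemma tm_dom[simp]: "Dom C (f \<otimes> g) = Dom C f \<odot> Dom C g"
  and tm_cod[simp]: "Cod C (f \<otimes> g) = Cod C f \<odot> Cod C g"
  using sm unfolding strict_monoidal_ax_def hom_def by auto

lemma tm_assoc[simp]: "(f \<otimes> g) \<otimes> h = f \<otimes> (g \<otimes> h)"
  and tm_unit[simp]: "idm U \<otimes> f = f" "f \<otimes> idm U = f"
  and tm_id[simp]: "idm X \<otimes> idm Y = idm (X \<odot> Y)"
  using sm unfolding strict_monoidal_ax_def by auto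

lemma tm_id2[simp]: "idm X \<otimes> (idm Y \<otimes> f) = idm (X \<odot> Y) \<otimes> f"
  by (metis tm_assoc tm_id)

lemma xchg: "Cod C f1 = Dom C g1 \<Longrightarrow> Cod C f2 = Dom C g2 \<Longrightarrow>
   (g1 \<otimes> g2) \<cdot> (f1 \<otimes> f2) = (g1 \<cdot> f1) \<otimes> (g2 \<cdot> f2)"
  using sm unfolding strict_monoidal_ax_def by auto

lemma splitL: "f \<otimes> g = (f \<otimes> idm (Cod C g)) \<cdot> (idm (Dom C f) \<otimes> g)"
  by (simp add: xchg)
lemma splitR: "f \<otimes> g = (idm (Cod C f) \<otimes> g) \<cdot> (f \<otimes> idm (Dom C g))"
  by (simp add: xchg)


lemma idem_iso: "Dom C f = X \<Longrightarrow> Cod C f = X \<Longrightarrow> f \<cdot> f = f \<Longrightarrow> is_iso C f \<Longrightarrow> f = idm X"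
proof -
  assume a: "Dom C f = X" "Cod C f = X" "f \<cdot> f = f" "is_iso C f"
  then obtain g where g: "Dom C g = X" "Cod C g = X" "g \<cdot> f = idm X" unfolding is_iso_def hom_def by auto
  have "f = idm X \<cdot> f" using a by simp
  also have "\<dots> = (g \<cdot> f) \<cdot> f" using g by simp
  also have "\<dots> = g \<cdot> (f \<cdot> f)" using a g by (intro assoc[symmetric]) auto
  also have "\<dots> = idm X" by (simp only: a(3) g(3))
  finally show ?thesis .
qed

lemma braid_dom[simp]: "Dom C (Braid C X Y) = X \<odot> Y" and braid_cod[simp]: "Cod C (Braid C X Y) = Y \<odot> X"
  and braid_iso: "is_iso C (Braid C X Y)"
  using br unfolding braided_ax_def hom_def by auto

lemma braid_nat: "Braid C (Cod C f) (Cod C g) \<cdot> (f \<otimes> g) = (g \<otimes> f) \<cdot> Braid C (Dom C f) (Dom C g)"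
  using br unfolding braided_ax_def by auto

lemma hex1: "Braid C X (Y \<odot> Z) = (idm Y \<otimes> Braid C X Z) \<cdot> (Braid C X Y \<otimes> idm Z)"
  and hex2: "Braid C (X \<odot> Y) Z = (Braid C X Z \<otimes> idm Y) \<cdot> (idm X \<otimes> Braid C Y Z)"
  using br unfolding braided_ax_def by auto

lemma braid_unitR[simp]: "Braid C X U = idm X"
proof -
  have "Braid C X U = Braid C X U \<cdot> Braid C X U"
    using hex1[of X U U] by simp
  then show ?thesis using idem_iso[of "Braid C X U" X] braid_iso by simp
qed

lemma braid_unitL[simp]: "Braid C U X = idm X"
proof -
  have "Braid C U X = Braid C U X \<cdot> Braid C U X"
    using hex2[of U U X] by simp
  then show ?thesis using idem_iso[of "Braid C U X" X] braid_iso by simp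
qed

lemma ev_dom[simp]: "Dom C (Ev C X) = Dual C X \<odot> X" and ev_cod[simp]: "Cod C (Ev C X) = U"
  and coev_dom[simp]: "Dom C (Coev C X) = U" and coev_cod[simp]: "Cod C (Coev C X) = X \<odot> Dual C X"
  using rg unfolding rigid_ax_def hom_def by auto

lemma snake1: "(idm X \<otimes> Ev C X) \<cdot> (Coev C X \<otimes> idm X) = idm X"
  and snake2: "(Ev C X \<otimes> idm (Dual C X)) \<cdot> (idm (Dual C X) \<otimes> Coev C X) = idm (Dual C X)"
  using rg unfolding rigid_ax_def by auto

lemma tw_dom[simp]: "Dom C (Twist C X) = X" and tw_cod[simp]: "Cod C (Twist C X) = X"
  and tw_iso: "is_iso C (Twist C X)"
  using tw unfolding twist_ax_def hom_def by auto

lemma tw_nat: "Twist C (Cod C f) \<cdot> f = f \<cdot> Twist C (Dom C f)"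
  and tw_tens: "Twist C (X \<odot> Y) = Braid C Y X \<cdot> (Braid C X Y \<cdot> (Twist C X \<otimes> Twist C Y))"
  using tw unfolding twist_ax_def by auto

lemma tw_unit[simp]: "Twist C U = idm U"
proof -
  have "Twist C U \<otimes> Twist C U = (Twist C U \<cdot> idm U) \<otimes> (idm U \<cdot> Twist C U)" by simp
  also have "\<dots> = Twist C U \<cdot> Twist C U" by (subst xchg[symmetric]) auto
  finally have "Twist C U = Twist C U \<cdot> Twist C U" using tw_tens[of U U] by simp
  then show ?thesis using idem_iso[of "Twist C U" U] tw_iso by simp
qed


lemma assocR: "Cod C f = Dom C g \<Longrightarrow> Cod C g = Dom C h \<Longrightarrow> (h \<cdot> g) \<cdot> f = h \<cdot> (g \<cdot> f)"
  by (simp add: assoc)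

lemma pre: "a \<cdot> b = c \<Longrightarrow> Cod C r = Dom C b \<Longrightarrow> Cod C b = Dom C a \<Longrightarrow> a \<cdot> (b \<cdot> r) = c \<cdot> r"
  by (simp add: assoc)


lemma sl1: "Cod C f = U \<Longrightarrow> Dom C g = Y \<Longrightarrow> g \<cdot> (f \<otimes> idm Y) = f \<otimes> g"
  using xchg[of f "idm U" "idm Y" g] by simp
lemma sl2: "Dom C f = U \<Longrightarrow> Cod C g = Y \<Longrightarrow> (f \<otimes> idm Y) \<cdot> g = f \<otimes> g"
  using xchg[of "idm U" f g "idm Y"] by simp
lemma sl3: "Cod C g = U \<Longrightarrow> Dom C f = X \<Longrightarrow> f \<cdot> (idm X \<otimes> g) = f \<otimes> g"
  using xchg[of "idm X" f g "idm U"] by simp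
lemma sl4: "Dom C g = U \<Longrightarrow> Cod C f = X \<Longrightarrow> (idm X \<otimes> g) \<cdot> f = f \<otimes> g"
  using xchg[of f "idm X" "idm U" g] by simp
lemma sl5: "Cod C f = U \<Longrightarrow> Cod C g = Dom C h \<Longrightarrow> h \<cdot> (f \<otimes> g) = f \<otimes> (h \<cdot> g)"
  using xchg[of f "idm U" g h] by simp
lemma sl6: "Dom C f = U \<Longrightarrow> Cod C g = Dom C h \<Longrightarrow> (f \<otimes> h) \<cdot> g = f \<otimes> (h \<cdot> g)"
  using xchg[of "idm U" f g h] by simp
lemma sl7: "Cod C g = U \<Longrightarrow> Cod C f = Dom C h \<Longrightarrow> h \<cdot> (f \<otimes> g) = (h \<cdot> f) \<otimes> g"
  using xchg[of f h g "idm U"] by simp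
lemma sl8: "Dom C g = U \<Longrightarrow> Cod C f = Dom C h \<Longrightarrow> (h \<otimes> g) \<cdot> f = (h \<cdot> f) \<otimes> g"
  using xchg[of f h "idm U" g] by simp
lemma xR: "Dom C f = X \<Longrightarrow> Cod C g = Y \<Longrightarrow> (f \<otimes> idm Y) \<cdot> (idm X \<otimes> g) = f \<otimes> g"
  by (simp add: xchg)
lemma xL: "Cod C f = X \<Longrightarrow> Dom C g = Y \<Longrightarrow> (idm X \<otimes> g) \<cdot> (f \<otimes> idm Y) = f \<otimes> g"
  by (simp add: xchg)
lemma W1: "Cod C f = Dom C g \<Longrightarrow> (idm X \<otimes> g) \<cdot> (idm X \<otimes> f) = idm X \<otimes> (g \<cdot> f)"
  by (simp add: xchg)
lemma W2: "Cod C f = Dom C g \<Longrightarrow> (g \<otimes> idm X) \<cdot> (f \<otimes> idm X) = (g \<cdot> f) \<otimes> idm X"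
  by (simp add: xchg)

end


locale frob = rib +
  fixes A and mu eta delta eps
  assumes fa: "frobenius_algebra C A mu eta delta eps"
    and cm: "commutative_alg C A mu"
begin

lemma mu_dom[simp]: "Dom C mu = A \<odot> A" and mu_cod[simp]: "Cod C mu = A"
  and eta_dom[simp]: "Dom C eta = U" and eta_cod[simp]: "Cod C eta = A"
  and delta_dom[simp]: "Dom C delta = A" and delta_cod[simp]: "Cod C delta = A \<odot> A"
  and eps_dom[simp]: "Dom C eps = A" and eps_cod[simp]: "Cod C eps = U"
  using fa unfolding frobenius_algebra_def hom_def by auto

lemma m_assoc: "mu \<cdot> (mu \<otimes> idm A) = mu \<cdot> (idm A \<otimes> mu)"
  and m_unitL: "mu \<cdot> (eta \<otimes> idm A) = idm A"
  and m_unitR: "mu \<cdot> (idm A \<otimes> eta) = idm A"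
  and d_coassoc: "(delta \<otimes> idm A) \<cdot> delta = (idm A \<otimes> delta) \<cdot> delta"
  and d_counitL: "(eps \<otimes> idm A) \<cdot> delta = idm A"
  and d_counitR: "(idm A \<otimes> eps) \<cdot> delta = idm A"
  and frobL: "(idm A \<otimes> mu) \<cdot> (delta \<otimes> idm A) = delta \<cdot> mu"
  and frobR: "(mu \<otimes> idm A) \<cdot> (idm A \<otimes> delta) = delta \<cdot> mu"
  using fa unfolding frobenius_algebra_def by auto

lemma comm: "mu \<cdot> Braid C A A = mu"
  using cm unfolding commutative_alg_def by simp

definition kap where "kap = eps \<cdot> mu"
definition D where "D = delta \<cdot> eta"

lemma kap_dom[simp]: "Dom C kap = A \<odot> A" and kap_cod[simp]: "Cod C kap = U"
  and D_dom[simp]: "Dom C D = U" and D_cod[simp]: "Cod C D = A \<odot> A"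
  by (simp_all add: kap_def D_def)

lemma S1: "(kap \<otimes> idm A) \<cdot> (idm A \<otimes> D) = idm A"
proof -
  have 1: "kap \<otimes> idm A = (eps \<otimes> idm A) \<cdot> (mu \<otimes> idm A)" by (simp add: xchg kap_def)
  have 2: "idm A \<otimes> D = (idm A \<otimes> delta) \<cdot> (idm A \<otimes> eta)" by (simp add: xchg D_def)
  have "(kap \<otimes> idm A) \<cdot> (idm A \<otimes> D) = (eps \<otimes> idm A) \<cdot> ((mu \<otimes> idm A) \<cdot> ((idm A \<otimes> delta) \<cdot> (idm A \<otimes> eta)))"
    unfolding 1 2 by (simp add: assocR)
  also have "\<dots> = (eps \<otimes> idm A) \<cdot> (delta \<cdot> (mu \<cdot> (idm A \<otimes> eta)))"
    by (simp add: pre[OF frobR] assocR)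
  also have "\<dots> = idm A" by (simp add: m_unitR d_counitL)
  finally show ?thesis .
qed

lemma S2: "(idm A \<otimes> kap) \<cdot> (D \<otimes> idm A) = idm A"
proof -
  have 1: "idm A \<otimes> kap = (idm A \<otimes> eps) \<cdot> (idm A \<otimes> mu)" by (simp add: xchg kap_def)
  have 2: "D \<otimes> idm A = (delta \<otimes> idm A) \<cdot> (eta \<otimes> idm A)" by (simp add: xchg D_def)
  have "(idm A \<otimes> kap) \<cdot> (D \<otimes> idm A) = (idm A \<otimes> eps) \<cdot> ((idm A \<otimes> mu) \<cdot> ((delta \<otimes> idm A) \<cdot> (eta \<otimes> idm A)))"
    unfolding 1 2 by (simp add: assocR)
  also have "\<dots> = (idm A \<otimes> eps) \<cdot> (delta \<cdot> (mu \<cdot> (eta \<otimes> idm A)))"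
    by (simp add: pre[OF frobL] assocR)
  also have "\<dots> = idm A" by (simp add: m_unitL d_counitR)
  finally show ?thesis .
qed

lemma deltaL: "delta = (idm A \<otimes> mu) \<cdot> (D \<otimes> idm A)"
proof -
  have "(idm A \<otimes> mu) \<cdot> (D \<otimes> idm A) = (idm A \<otimes> mu) \<cdot> ((delta \<otimes> idm A) \<cdot> (eta \<otimes> idm A))"
    by (simp add: xchg D_def)
  also have "\<dots> = delta \<cdot> (mu \<cdot> (eta \<otimes> idm A))" by (simp add: pre[OF frobL] assocR)
  finally show ?thesis by (simp add: m_unitL)
qed

lemma deltaR: "delta = (mu \<otimes> idm A) \<cdot> (idm A \<otimes> D)"
proof -
  have "(mu \<otimes> idm A) \<cdot> (idm A \<otimes> D) = (mu \<otimes> idm A) \<cdot> ((idm A \<otimes> delta) \<cdot> (idm A \<otimes> eta))"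
    by (simp add: xchg D_def)
  also have "\<dots> = delta \<cdot> (mu \<cdot> (idm A \<otimes> eta))" by (simp add: pre[OF frobR] assocR)
  finally show ?thesis by (simp add: m_unitR)
qed


abbreviation A' where "A' \<equiv> Dual C A"
abbreviation ev where "ev \<equiv> Ev C A"
abbreviation co where "co \<equiv> Coev C A"

definition Ph1 where "Ph1 = (kap \<otimes> idm A') \<cdot> (idm A \<otimes> co)"
definition Psi where "Psi = (ev \<otimes> idm A) \<cdot> (idm A' \<otimes> D)"

lemma Ph1_dom[simp]: "Dom C Ph1 = A" and Ph1_cod[simp]: "Cod C Ph1 = A'"
  and Psi_dom[simp]: "Dom C Psi = A'" and Psi_cod[simp]: "Cod C Psi = A"
  by (simp_all add: Ph1_def Psi_def)

lemma Q1: "(idm A \<otimes> Psi) \<cdot> co = D"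
proof -
  have e1: "(idm A \<otimes> (ev \<otimes> idm A)) \<cdot> (co \<otimes> idm (A \<odot> A)) = idm (A \<odot> A)"
  proof -
    have "((idm A \<otimes> ev) \<otimes> idm A) \<cdot> ((co \<otimes> idm A) \<otimes> idm A) = ((idm A \<otimes> ev) \<cdot> (co \<otimes> idm A)) \<otimes> idm A"
      by (rule W2) simp
    then show ?thesis by (simp add: snake1)
  qed
  have e2: "(idm (A \<odot> A') \<otimes> D) \<cdot> co = (co \<otimes> idm (A \<odot> A)) \<cdot> D"
    using sl4[of D co "A \<odot> A'"] sl2[of co D "A \<odot> A"] by simp
  have "(idm A \<otimes> Psi) \<cdot> co = ((idm A \<otimes> (ev \<otimes> idm A)) \<cdot> (idm A \<otimes> (idm A' \<otimes> D))) \<cdot> co"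
    unfolding Psi_def by (subst W1) simp_all
  also have "\<dots> = (idm A \<otimes> (ev \<otimes> idm A)) \<cdot> ((co \<otimes> idm (A \<odot> A)) \<cdot> D)"
    by (subst assocR) (simp_all add: e2)
  also have "\<dots> = D" by (subst assoc) (simp_all add: e1)
  finally show ?thesis .
qed

lemma Q2: "(idm A \<otimes> Ph1) \<cdot> D = co"
proof -
  have e1: "(idm A \<otimes> (kap \<otimes> idm A')) \<cdot> (D \<otimes> idm (A \<odot> A')) = idm (A \<odot> A')"
  proof -
    have "((idm A \<otimes> kap) \<otimes> idm A') \<cdot> ((D \<otimes> idm A) \<otimes> idm A') = ((idm A \<otimes> kap) \<cdot> (D \<otimes> idm A)) \<otimes> idm A'"
      by (rule W2) simp
    then show ?thesis by (simp add: S2)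
  qed
  have e2: "(idm (A \<odot> A) \<otimes> co) \<cdot> D = (D \<otimes> idm (A \<odot> A')) \<cdot> co"
    using sl4[of co D "A \<odot> A"] sl2[of D co "A \<odot> A'"] by simp
  have "(idm A \<otimes> Ph1) \<cdot> D = ((idm A \<otimes> (kap \<otimes> idm A')) \<cdot> (idm A \<otimes> (idm A \<otimes> co))) \<cdot> D"
    unfolding Ph1_def by (subst W1) simp_all
  also have "\<dots> = (idm A \<otimes> (kap \<otimes> idm A')) \<cdot> ((D \<otimes> idm (A \<odot> A')) \<cdot> co)"
    by (subst assocR) (simp_all add: e2)
  also have "\<dots> = co" by (subst assoc) (simp_all add: e1)
  finally show ?thesis .
qed

lemma PsiPh1: "Psi \<cdot> Ph1 = idm A"
proof -
  have "Psi \<cdot> Ph1 = (Psi \<cdot> (kap \<otimes> idm A')) \<cdot> (idm A \<otimes> co)"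
    unfolding Ph1_def by (subst assoc) simp_all
  also have "\<dots> = (kap \<otimes> Psi) \<cdot> (idm A \<otimes> co)" by (subst sl1) simp_all
  also have "\<dots> = ((kap \<otimes> idm A) \<cdot> (idm (A \<odot> A) \<otimes> Psi)) \<cdot> (idm A \<otimes> co)"
    by (subst xR) simp_all
  also have "\<dots> = (kap \<otimes> idm A) \<cdot> ((idm A \<otimes> (idm A \<otimes> Psi)) \<cdot> (idm A \<otimes> co))"
    by (subst assocR) simp_all
  also have "\<dots> = (kap \<otimes> idm A) \<cdot> (idm A \<otimes> D)"
    by (subst W1) (simp_all add: Q1)
  also have "\<dots> = idm A" by (rule S1)
  finally show ?thesis .
qed

lemma Ph1Psi: "Ph1 \<cdot> Psi = idm A'"
proof -
  have "Ph1 \<cdot> Psi = (Ph1 \<cdot> (ev \<otimes> idm A)) \<cdot> (idm A' \<otimes> D)"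
    unfolding Psi_def by (subst assoc) simp_all
  also have "\<dots> = (ev \<otimes> Ph1) \<cdot> (idm A' \<otimes> D)" by (subst sl1) simp_all
  also have "\<dots> = ((ev \<otimes> idm A') \<cdot> (idm (A' \<odot> A) \<otimes> Ph1)) \<cdot> (idm A' \<otimes> D)"
    by (subst xR) simp_all
  also have "\<dots> = (ev \<otimes> idm A') \<cdot> ((idm A' \<otimes> (idm A \<otimes> Ph1)) \<cdot> (idm A' \<otimes> D))"
    by (subst assocR) simp_all
  also have "\<dots> = (ev \<otimes> idm A') \<cdot> (idm A' \<otimes> co)"
    by (subst W1) (simp_all add: Q2)
  also have "\<dots> = idm A'" by (rule snake2)
  finally show ?thesis .
qed


abbreviation th where "th \<equiv> Twist C A"
abbreviation cAA where "cAA \<equiv> Braid C A A"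
definition Tc where "Tc = tcoev C A"
definition Ph2 where "Ph2 = (idm A' \<otimes> kap) \<cdot> (Tc \<otimes> idm A)"

lemma Tc_dom[simp]: "Dom C Tc = U" and Tc_cod[simp]: "Cod C Tc = A' \<odot> A"
  by (simp_all add: Tc_def tcoev_def)
lemma Ph2_dom[simp]: "Dom C Ph2 = A" and Ph2_cod[simp]: "Cod C Ph2 = A'"
  by (simp_all add: Ph2_def)

lemma inv_Ph1: "inverse_mor C Ph1 = Psi"
  unfolding inverse_mor_def
proof (rule the_equality)
  show "Psi \<in> hom C (Cod C Ph1) (Dom C Ph1) \<and> Psi \<cdot> Ph1 = idm (Dom C Ph1) \<and> Ph1 \<cdot> Psi = idm (Cod C Ph1)"
    by (simp add: hom_def PsiPh1 Ph1Psi)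
next
  fix g assume g: "g \<in> hom C (Cod C Ph1) (Dom C Ph1) \<and> g \<cdot> Ph1 = idm (Dom C Ph1) \<and> Ph1 \<cdot> g = idm (Cod C Ph1)"
  then have gd: "Dom C g = A'" "Cod C g = A" "g \<cdot> Ph1 = idm A" by (auto simp: hom_def)
  have "g = g \<cdot> (Ph1 \<cdot> Psi)" using gd by (simp add: Ph1Psi)
  also have "\<dots> = (g \<cdot> Ph1) \<cdot> Psi" using gd by (subst assoc) simp_all
  also have "\<dots> = Psi" using gd by simp
  finally show "g = Psi" .
qed

lemma recon: "Dom C g = A \<Longrightarrow> Cod C g = A' \<Longrightarrow> g = ((ev \<cdot> (g \<otimes> idm A)) \<otimes> idm A') \<cdot> (idm A \<otimes> co)"
proof -
  assume g: "Dom C g = A" "Cod C g = A'"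
  have "((ev \<cdot> (g \<otimes> idm A)) \<otimes> idm A') \<cdot> (idm A \<otimes> co) = ((ev \<otimes> idm A') \<cdot> ((g \<otimes> idm A) \<otimes> idm A')) \<cdot> (idm A \<otimes> co)"
    using g by (subst W2) simp_all
  also have "\<dots> = (ev \<otimes> idm A') \<cdot> ((g \<otimes> idm (A \<odot> A')) \<cdot> (idm A \<otimes> co))"
    using g by (subst assocR) simp_all
  also have "\<dots> = (ev \<otimes> idm A') \<cdot> ((idm A' \<otimes> co) \<cdot> g)"
    using g by (simp add: xR sl4)
  also have "\<dots> = g" using g by (subst assoc) (simp_all add: snake2)
  finally show ?thesis by simp
qed

lemma ev_Ph1: "ev \<cdot> (Ph1 \<otimes> idm A) = kap"
proof -
  have "ev \<cdot> (Ph1 \<otimes> idm A) = ev \<cdot> (((kap \<otimes> idm A') \<otimes> idm A) \<cdot> ((idm A \<otimes> co) \<otimes> idm A))"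
    unfolding Ph1_def by (subst W2) simp_all
  also have "\<dots> = (ev \<cdot> (kap \<otimes> idm (A' \<odot> A))) \<cdot> (idm A \<otimes> (co \<otimes> idm A))"
    by (subst assoc) simp_all
  also have "\<dots> = (kap \<cdot> (idm (A \<odot> A) \<otimes> ev)) \<cdot> (idm A \<otimes> (co \<otimes> idm A))"
    by (simp add: sl1 sl3)
  also have "\<dots> = kap \<cdot> ((idm A \<otimes> (idm A \<otimes> ev)) \<cdot> (idm A \<otimes> (co \<otimes> idm A)))"
    by (subst assocR) simp_all
  also have "\<dots> = kap" by (subst W1) (simp_all add: snake1)
  finally show ?thesis .
qed

lemma bk: "kap \<otimes> idm A = (idm A \<otimes> kap) \<cdot> Braid C (A \<odot> A) A"
  using braid_nat[of kap "idm A"] by simp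

lemma cnat: "cAA \<cdot> (th \<otimes> idm A) = (idm A \<otimes> th) \<cdot> cAA"
  using braid_nat[of th "idm A"] by simp

lemma Qm: "(ev \<otimes> idm A) \<cdot> ((idm A' \<otimes> cAA) \<cdot> (Tc \<otimes> idm A)) = th"
proof -
  have t: "Tc \<otimes> idm A = (idm A' \<otimes> (th \<otimes> idm A)) \<cdot> ((Braid C A A' \<otimes> idm A) \<cdot> (co \<otimes> idm A))"
    unfolding Tc_def tcoev_def
    by (subst W2[symmetric], simp, subst W2[symmetric], simp_all)
  have h: "(ev \<otimes> idm A) \<cdot> ((idm A' \<otimes> cAA) \<cdot> (Braid C A A' \<otimes> idm A)) = idm A \<otimes> ev"
    using braid_nat[of "idm A" ev] hex1[of A A' A] by simp
  have w: "(idm A' \<otimes> (idm A \<otimes> th)) \<cdot> (idm A' \<otimes> cAA) = idm A' \<otimes> ((idm A \<otimes> th) \<cdot> cAA)"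
    by (rule W1) simp
  have "(idm A' \<otimes> cAA) \<cdot> (idm A' \<otimes> (th \<otimes> idm A)) = (idm (A' \<odot> A) \<otimes> th) \<cdot> (idm A' \<otimes> cAA)"
    using w by (simp add: W1 cnat)
  then have "(ev \<otimes> idm A) \<cdot> ((idm A' \<otimes> cAA) \<cdot> (Tc \<otimes> idm A))
      = ((ev \<otimes> idm A) \<cdot> (idm (A' \<odot> A) \<otimes> th)) \<cdot> ((idm A' \<otimes> cAA) \<cdot> ((Braid C A A' \<otimes> idm A) \<cdot> (co \<otimes> idm A)))"
    unfolding t by (simp add: assoc)
  also have "\<dots> = (th \<cdot> (ev \<otimes> idm A)) \<cdot> ((idm A' \<otimes> cAA) \<cdot> ((Braid C A A' \<otimes> idm A) \<cdot> (co \<otimes> idm A)))"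
    by (simp add: xR sl1)
  also have "\<dots> = th \<cdot> (((ev \<otimes> idm A) \<cdot> ((idm A' \<otimes> cAA) \<cdot> (Braid C A A' \<otimes> idm A))) \<cdot> (co \<otimes> idm A))"
    by (simp add: assoc)
  also have "\<dots> = th" by (simp add: h snake1)
  finally show ?thesis .
qed


abbreviation c3 where "c3 \<equiv> Braid C (A \<odot> A) A"

lemma ev_Ph2: "ev \<cdot> (Ph2 \<otimes> idm A) = kap \<cdot> ((th \<otimes> idm A) \<cdot> cAA)"
proof -
  have s1: "Ph2 \<otimes> idm A = (idm A' \<otimes> (kap \<otimes> idm A)) \<cdot> (Tc \<otimes> idm (A \<odot> A))"
    unfolding Ph2_def by (subst W2[symmetric]) simp_all
  have w: "(idm A' \<otimes> (idm A \<otimes> kap)) \<cdot> (idm A' \<otimes> c3) = idm A' \<otimes> ((idm A \<otimes> kap) \<cdot> c3)"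
    by (rule W1) simp
  have k: "idm A' \<otimes> (kap \<otimes> idm A) = (idm (A' \<odot> A) \<otimes> kap) \<cdot> (idm A' \<otimes> c3)"
    using w bk by simp
  have e: "ev \<cdot> (idm (A' \<odot> A) \<otimes> kap) = kap \<cdot> (ev \<otimes> idm (A \<odot> A))"
    by (simp add: sl1 sl3)
  have w2: "(idm A' \<otimes> (cAA \<otimes> idm A)) \<cdot> (idm A' \<otimes> (idm A \<otimes> cAA)) = idm A' \<otimes> ((cAA \<otimes> idm A) \<cdot> (idm A \<otimes> cAA))"
    by (rule W1) simp
  have x: "(idm (A' \<odot> A) \<otimes> cAA) \<cdot> (Tc \<otimes> idm (A \<odot> A)) = (Tc \<otimes> idm (A \<odot> A)) \<cdot> cAA"
    by (simp add: xL sl2)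
  have c: "(idm A' \<otimes> c3) \<cdot> (Tc \<otimes> idm (A \<odot> A)) = (idm A' \<otimes> (cAA \<otimes> idm A)) \<cdot> ((Tc \<otimes> idm (A \<odot> A)) \<cdot> cAA)"
  proof -
    have "(idm A' \<otimes> c3) \<cdot> (Tc \<otimes> idm (A \<odot> A)) = ((idm A' \<otimes> (cAA \<otimes> idm A)) \<cdot> (idm (A' \<odot> A) \<otimes> cAA)) \<cdot> (Tc \<otimes> idm (A \<odot> A))"
      using w2 hex2[of A A A] by simp
    also have "\<dots> = (idm A' \<otimes> (cAA \<otimes> idm A)) \<cdot> ((Tc \<otimes> idm (A \<odot> A)) \<cdot> cAA)"
      by (subst assocR) (simp_all add: x)
    finally show ?thesis .
  qed
  have a: "((ev \<otimes> idm A) \<otimes> idm A) \<cdot> (((idm A' \<otimes> cAA) \<otimes> idm A) \<cdot> ((Tc \<otimes> idm A) \<otimes> idm A)) = th \<otimes> idm A"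
    by (subst W2, simp, subst W2, simp_all add: Qm)
  have "ev \<cdot> (Ph2 \<otimes> idm A) = (ev \<cdot> (idm (A' \<odot> A) \<otimes> kap)) \<cdot> ((idm A' \<otimes> c3) \<cdot> (Tc \<otimes> idm (A \<odot> A)))"
    unfolding s1 k by (simp add: assoc)
  also have "\<dots> = kap \<cdot> ((ev \<otimes> idm (A \<odot> A)) \<cdot> ((idm A' \<otimes> (cAA \<otimes> idm A)) \<cdot> ((Tc \<otimes> idm (A \<odot> A)) \<cdot> cAA)))"
    unfolding e c by (simp add: assoc)
  also have "\<dots> = kap \<cdot> ((th \<otimes> idm A) \<cdot> cAA)"
    using a by (simp add: assoc)
  finally show ?thesis .
qed


lemma th_mu: "mu \<cdot> (th \<otimes> th) = th \<cdot> mu"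
proof -
  have "th \<cdot> mu = mu \<cdot> (cAA \<cdot> (cAA \<cdot> (th \<otimes> th)))"
    using tw_nat[of mu] tw_tens[of A A] by simp
  also have "\<dots> = ((mu \<cdot> cAA) \<cdot> cAA) \<cdot> (th \<otimes> th)" by (simp add: assoc)
  also have "\<dots> = mu \<cdot> (th \<otimes> th)" by (simp add: comm)
  finally show ?thesis by simp
qed

lemma kap_th: "kap \<cdot> (th \<otimes> th) = kap"
proof -
  have "kap \<cdot> (th \<otimes> th) = eps \<cdot> (mu \<cdot> (th \<otimes> th))" unfolding kap_def
    by (simp add: assoc)
  also have "\<dots> = eps \<cdot> (th \<cdot> mu)" by (simp only: th_mu)
  also have "\<dots> = (eps \<cdot> th) \<cdot> mu" by (simp add: assoc)
  also have "\<dots> = kap" using tw_nat[of eps] by (simp add: kap_def)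
  finally show ?thesis .
qed

lemma kap_c: "kap \<cdot> cAA = kap"
  unfolding kap_def by (subst assocR) (simp_all add: comm)

lemma Ph2_th: "Ph2 \<cdot> th = Ph1"
proof -
  have "ev \<cdot> ((Ph2 \<cdot> th) \<otimes> idm A) = ev \<cdot> ((Ph2 \<otimes> idm A) \<cdot> (th \<otimes> idm A))"
    by (subst W2) simp_all
  also have "\<dots> = (kap \<cdot> ((th \<otimes> idm A) \<cdot> cAA)) \<cdot> (th \<otimes> idm A)"
    by (subst assoc) (simp_all add: ev_Ph2)
  also have "\<dots> = kap \<cdot> ((th \<otimes> idm A) \<cdot> (cAA \<cdot> (th \<otimes> idm A)))"
    by (simp add: assoc)
  also have "\<dots> = kap \<cdot> (((th \<otimes> idm A) \<cdot> (idm A \<otimes> th)) \<cdot> cAA)"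
    by (simp add: cnat assoc)
  also have "\<dots> = (kap \<cdot> (th \<otimes> th)) \<cdot> cAA"
    by (simp add: xchg assoc)
  also have "\<dots> = kap" by (simp add: kap_th kap_c)
  finally have "ev \<cdot> ((Ph2 \<cdot> th) \<otimes> idm A) = ev \<cdot> (Ph1 \<otimes> idm A)" by (simp add: ev_Ph1)
  then show ?thesis using recon[of "Ph2 \<cdot> th"] recon[of Ph1] by simp
qed

definition N where "N = Psi \<cdot> Ph2"

lemma nak: "nakayama C A mu eps = N"
  unfolding nakayama_def Let_def kap_def[symmetric] Ph1_def[symmetric] Tc_def[symmetric]
    Ph2_def[symmetric] inv_Ph1 N_def ..

lemma N_dom[simp]: "Dom C N = A" and N_cod[simp]: "Cod C N = A"
  by (simp_all add: N_def)

lemma N_th: "N \<cdot> th = idm A"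
  unfolding N_def by (subst assocR) (simp_all add: Ph2_th PsiPh1)

lemma th_N: "th \<cdot> N = idm A"
proof -
  obtain g where g: "Dom C g = A" "Cod C g = A" "g \<cdot> th = idm A" "th \<cdot> g = idm A"
    using tw_iso[of A] unfolding is_iso_def hom_def by auto
  have "N = N \<cdot> (th \<cdot> g)" using g by simp
  also have "\<dots> = g" using g by (subst assoc) (simp_all add: N_th)
  finally show ?thesis using g by simp
qed

lemma N_mu: "N \<cdot> mu = mu \<cdot> (N \<otimes> N)"
proof -
  have i: "(th \<otimes> th) \<cdot> (N \<otimes> N) = idm (A \<odot> A)" by (simp add: xchg th_N)
  have "N \<cdot> mu = N \<cdot> (mu \<cdot> ((th \<otimes> th) \<cdot> (N \<otimes> N)))" by (simp add: i)
  also have "\<dots> = N \<cdot> ((mu \<cdot> (th \<otimes> th)) \<cdot> (N \<otimes> N))" by (simp add: assoc)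
  also have "\<dots> = (N \<cdot> th) \<cdot> (mu \<cdot> (N \<otimes> N))" by (simp add: th_mu assoc)
  also have "\<dots> = mu \<cdot> (N \<otimes> N)" by (simp add: N_th)
  finally show ?thesis .
qed


abbreviation Sm where "Sm \<equiv> Smult C"

lemma sm_dom[simp]: "Dom C (Sm a f) = Dom C f" and sm_cod[simp]: "Cod C (Sm a f) = Cod C f"
  using kl unfolding klinear_ax_def hom_def by auto

lemma zero_dom[simp]: "Dom C (Zero C X Y) = X" and zero_cod[simp]: "Cod C (Zero C X Y) = Y"
  using kl unfolding klinear_ax_def hom_def by auto

lemma sm_mult: "Sm (a * b) f = Sm a (Sm b f)" and sm_one[simp]: "Sm 1 f = f"
  using kl unfolding klinear_ax_def hom_def by auto

lemma comp_sm: "Cod C f = Dom C g \<Longrightarrow> g \<cdot> Sm a f = Sm a (g \<cdot> f)"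
  using kl unfolding klinear_ax_def hom_def by auto

lemma tm_sm: "Sm a f \<otimes> g = Sm a (f \<otimes> g)" "g \<otimes> Sm a f = Sm a (g \<otimes> f)"
  using sm unfolding strict_monoidal_ax_def by auto

lemma k_add: "\<forall>X Y a b. \<forall>f\<in>hom C X Y. Sm (a + b) f = Add C (Sm a f) (Sm b f)"
  using kl unfolding klinear_ax_def by (elim conjE) assumption
lemma k_assoc: "\<forall>X Y. \<forall>f\<in>hom C X Y. \<forall>g\<in>hom C X Y. \<forall>h\<in>hom C X Y. Add C (Add C f g) h = Add C f (Add C g h)"
  using kl unfolding klinear_ax_def by (elim conjE) assumption
lemma k_zero: "\<forall>X Y. \<forall>f\<in>hom C X Y. Add C f (Zero C X Y) = f"
  using kl unfolding klinear_ax_def by (elim conjE) assumption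
lemma k_inv: "\<forall>X Y. \<forall>f\<in>hom C X Y. \<exists>g\<in>hom C X Y. Add C f g = Zero C X Y"
  using kl unfolding klinear_ax_def by (elim conjE) assumption

lemma sm_add: "Sm (a + b) f = Add C (Sm a f) (Sm b f)"
proof -
  have "f \<in> hom C (Dom C f) (Cod C f)" by (simp add: hom_def)
  then show ?thesis using k_add by blast
qed

lemma add_assoc': "f \<in> hom C X Y \<Longrightarrow> g \<in> hom C X Y \<Longrightarrow> h \<in> hom C X Y \<Longrightarrow> Add C (Add C f g) h = Add C f (Add C g h)"
  using k_assoc by blast
lemma add_zero': "f \<in> hom C X Y \<Longrightarrow> Add C f (Zero C X Y) = f"
  using k_zero by blast
lemma add_inv': "f \<in> hom C X Y \<Longrightarrow> \<exists>g \<in> hom C X Y. Add C f g = Zero C X Y"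
  using k_inv by blast

lemma sm_zero: "Sm 0 f = Zero C (Dom C f) (Cod C f)"
proof -
  let ?X = "Dom C f" and ?Y = "Cod C f"
  let ?S = "Sm 0 f"
  have S: "?S \<in> hom C ?X ?Y" by (simp add: hom_def)
  have ss: "?S = Add C ?S ?S" using sm_add[of 0 0 f] by simp
  obtain g where g: "g \<in> hom C ?X ?Y" "Add C ?S g = Zero C ?X ?Y"
    using add_inv'[OF S] by blast
  have "Zero C ?X ?Y = Add C (Add C ?S ?S) g" using g ss by simp
  also have "\<dots> = Add C ?S (Add C ?S g)" using add_assoc'[OF S S g(1)] .
  also have "\<dots> = ?S" using g add_zero'[OF S] by simp
  finally show ?thesis by simp
qed

lemma sm_cancel: "a \<noteq> 0 \<Longrightarrow> Sm a f = Sm a g \<Longrightarrow> f = g"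
proof -
  assume a: "a \<noteq> 0" "Sm a f = Sm a g"
  have "f = Sm (inverse a * a) f" using a by simp
  also have "\<dots> = Sm (inverse a) (Sm a g)" using a by (simp only: sm_mult)
  also have "\<dots> = g" using a by (simp add: sm_mult[symmetric])
  finally show ?thesis .
qed

end


context frob begin

definition w where "w = mu \<cdot> ((N \<otimes> idm A) \<cdot> D)"
lemma w_dom[simp]: "Dom C w = U" and w_cod[simp]: "Cod C w = A" by (simp_all add: w_def)

lemma fA: "mu \<cdot> ((N \<otimes> idm A) \<cdot> delta) = mu \<cdot> (w \<otimes> idm A)"
proof -
  have a1: "(N \<otimes> idm A) \<cdot> delta = (idm A \<otimes> mu) \<cdot> ((N \<otimes> idm (A \<odot> A)) \<cdot> (D \<otimes> idm A))"
    by (subst deltaL) (simp add: assoc xchg)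
  have a2: "(N \<otimes> idm (A \<odot> A)) \<cdot> (D \<otimes> idm A) = ((N \<otimes> idm A) \<cdot> D) \<otimes> idm A"
    by (subst W2[symmetric]) simp_all
  have "mu \<cdot> ((N \<otimes> idm A) \<cdot> delta) = (mu \<cdot> (mu \<otimes> idm A)) \<cdot> (((N \<otimes> idm A) \<cdot> D) \<otimes> idm A)"
    unfolding a1 a2 by (simp add: assoc m_assoc)
  also have "\<dots> = mu \<cdot> (w \<otimes> idm A)"
    unfolding w_def by (subst assocR) (simp_all add: W2)
  finally show ?thesis .
qed

lemma fB: "mu \<cdot> ((N \<otimes> idm A) \<cdot> delta) = mu \<cdot> (N \<otimes> w)"
proof -
  have b1: "(N \<otimes> idm A) \<cdot> (mu \<otimes> idm A) = (mu \<otimes> idm A) \<cdot> ((N \<otimes> N) \<otimes> idm A)"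
    by (simp add: W2 N_mu, subst W2[symmetric], simp_all)
  have b2: "(N \<otimes> (N \<otimes> idm A)) \<cdot> (idm A \<otimes> D) = N \<otimes> ((N \<otimes> idm A) \<cdot> D)"
    by (simp add: xchg)
  have "mu \<cdot> ((N \<otimes> idm A) \<cdot> delta) = mu \<cdot> (((N \<otimes> idm A) \<cdot> (mu \<otimes> idm A)) \<cdot> (idm A \<otimes> D))"
    by (subst deltaR) (simp add: assoc)
  also have "\<dots> = (mu \<cdot> (mu \<otimes> idm A)) \<cdot> ((N \<otimes> (N \<otimes> idm A)) \<cdot> (idm A \<otimes> D))"
    unfolding b1 by (simp add: assoc)
  also have "\<dots> = (mu \<cdot> (idm A \<otimes> mu)) \<cdot> (N \<otimes> ((N \<otimes> idm A) \<cdot> D))"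
    unfolding b2 m_assoc ..
  also have "\<dots> = mu \<cdot> (N \<otimes> w)"
    unfolding w_def by (subst assocR) (simp_all add: xchg)
  finally show ?thesis .
qed


lemma final:
  assumes sp: "special_frob C A mu eta delta eps" and hp: "haploid C A" and nn: "N \<noteq> idm A"
  shows "mu \<cdot> ((N \<otimes> idm A) \<cdot> delta) = Zero C A A"
proof -
  obtain f0 where f0: "f0 \<in> hom C U A" "f0 \<noteq> Zero C U A" "\<forall>g\<in>hom C U A. \<exists>a. g = Sm a f0"
    using hp unfolding haploid_def by blast
  have f0d[simp]: "Dom C f0 = U" "Cod C f0 = A" using f0(1) by (auto simp: hom_def)
  have "eta \<in> hom C U A" by (simp add: hom_def)
  then obtain a0 where a0: "eta = Sm a0 f0" using f0(3) by blast
  obtain a where a: "a \<noteq> 0" "eps \<cdot> eta = Sm a (idm U)" using sp unfolding special_frob_def by blast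
  have a0nz: "a0 \<noteq> 0"
  proof
    assume z: "a0 = 0"
    have "Sm a (idm U) = Sm 0 (eps \<cdot> f0)" using a a0 z by (simp add: comp_sm)
    also have "\<dots> = Zero C U U" by (simp add: sm_zero)
    also have "\<dots> = Sm 0 (idm U)" by (simp add: sm_zero)
    also have "\<dots> = Sm a (Sm 0 (idm U))" by (simp add: sm_mult[symmetric])
    finally have "idm U = Sm 0 (idm U)" using sm_cancel[OF a(1)] by blast
    then have "idm U = Zero C U U" by (simp add: sm_zero)
    then show False using su unfolding simple_unit_ax_def by simp
  qed
  have "w \<in> hom C U A" by (simp add: hom_def)
  then obtain b where b: "w = Sm b f0" using f0(3) by blast
  define c where "c = b * inverse a0"
  have wc: "w = Sm c eta"
  proof -
    have "Sm c eta = Sm b (Sm (inverse a0 * a0) f0)" unfolding c_def a0 by (simp add: sm_mult)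
    also have "\<dots> = w" using a0nz b by simp
    finally show ?thesis by simp
  qed
  have e1: "mu \<cdot> (w \<otimes> idm A) = Sm c (idm A)"
    unfolding wc by (simp add: tm_sm comp_sm m_unitL)
  have e2: "mu \<cdot> (N \<otimes> w) = Sm c N"
  proof -
    have "N \<otimes> eta = (idm A \<otimes> eta) \<cdot> N" by (simp add: sl4)
    then have "mu \<cdot> (N \<otimes> eta) = (mu \<cdot> (idm A \<otimes> eta)) \<cdot> N" by (simp add: assoc)
    then have "mu \<cdot> (N \<otimes> eta) = N" by (simp add: m_unitR)
    then show ?thesis unfolding wc by (simp add: tm_sm comp_sm)
  qed
  have "Sm c (idm A) = Sm c N" using fA fB e1 e2 by simp
  then have "c = 0" using sm_cancel nn by metis
  then show ?thesis using fA e1 by (simp add: sm_zero)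
qed

end

theorem mainTheorem4:
  fixes C :: "('o, 'm, 'k::field) rcat"
    and A :: 'o and mu eta delta eps :: 'm
  assumes "(2::'k) \<noteq> 0"
    and "ribbon_category C"
    and "frobenius_algebra C A mu eta delta eps"
    and "commutative_alg C A mu"
    and "delta_separable C A mu delta"
    and "special_frob C A mu eta delta eps"
    and "haploid C A"
    and "nakayama C A mu eps \<noteq> Id C A"
  shows "Comp C mu (Comp C (TensM C (nakayama C A mu eps) (Id C A)) delta) = Zero C A A"
proof -
  interpret frob C A mu eta delta eps
    using assms(2,3,4) by unfold_locales
  show ?thesis using final[OF assms(6) assms(7)] assms(8) nak by simp
qed

end
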